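(* Let $\alpha=(\alpha_1,\dots,\alpha_k)$ be a composition of $n$ with $k$ parts. The number of Dyck paths of semilength $n$ with ascent composition $\alpha$ is \[\det\left[\binom{j-i+\sum_{\ell=1}^i\alpha_\ell}{j-(i-1)}\right]_{1\le i,j\le k-1}\] (the empty determinant, for $k=1$, being $1$).
   Context: A Dyck path of semilength $n$ is a word in $U,D$ with $n$ letters of each kind such that every prefix has at least as many $U$'s as $D$'s. Writing it uniquely as $U^{\alpha_1}D^{\delta_1}\cdots U^{\alpha_k}D^{\delta_k}$ with all exponents positive, its ascent composition is $(\alpha_1,\dots,\alpha_k)$. Binomial coefficients $\binom{N}{r}$ with $r<0$ are $0$. *)

theory Defs
  imports Main "Jordan_Normal_Form.Determinant"
begin

text \<open>Words in U,D are lists of booleans: True = U, False = D.\<close>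

definition dyck_path :: "nat \<Rightarrow> bool list \<Rightarrow> bool" where
  "dyck_path n w \<longleftrightarrow>
     length (filter id w) = n \<and> length (filter Not w) = n \<and>
     (\<forall>m \<le> length w. length (filter Not (take m w)) \<le> length (filter id (take m w)))"

definition has_ascent_composition :: "bool list \<Rightarrow> nat list \<Rightarrow> bool" where
  "has_ascent_composition w \<alpha> \<longleftrightarrow>
     (\<exists>\<delta>. length \<delta> = length \<alpha> \<and> (\<forall>a \<in> set \<alpha>. 0 < a) \<and> (\<forall>d \<in> set \<delta>. 0 < d) \<and>
          w = concat (map (\<lambda>(a, d). replicate a True @ replicate d False) (zip \<alpha> \<delta>)))"

text \<open>Binomial coefficient with binom_neg0 N r = 0 for r < 0; here N is always >= 1 (since alpha_l >= 1), so nat N is harmless.\<close>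
definition binom_neg0 :: "int \<Rightarrow> int \<Rightarrow> int" where
  "binom_neg0 N r = (if r < 0 then 0 else int (nat N choose nat r))"

text \<open>The (k-1)x(k-1) matrix, entry (i,j) (1-based) = binom_neg0 (j-i+alpha_1+...+alpha_i) (j-(i-1)).
  Jordan_Normal_Form matrices are 0-based, so index i0 corresponds to i = i0+1.\<close>
definition ascent_matrix :: "nat list \<Rightarrow> int mat" where
  "ascent_matrix \<alpha> = mat (length \<alpha> - 1) (length \<alpha> - 1)
     (\<lambda>(i0, j0). let i = int i0 + 1; j = int j0 + 1 in
        binom_neg0 (j - i + int (sum_list (take (i0 + 1) \<alpha>))) (j - (i - 1)))"

end

theory Submission
  imports Defs
begin


definition V :: "(nat \<Rightarrow> nat) \<Rightarrow> nat \<Rightarrow> nat list set" where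
  "V a r = {\<delta>. length \<delta> = r \<and> (\<forall>x\<in>set \<delta>. 0 < x) \<and> (\<forall>i<r. sum_list (take (Suc i) \<delta>) \<le> a (Suc i))}"

definition Psi :: "(nat \<Rightarrow> nat) \<Rightarrow> nat \<Rightarrow> nat \<Rightarrow> nat" where
  "Psi a r q = (\<Sum>\<delta>\<in>V a r. (sum_list \<delta> + q - r - 1) choose (q - r))"

lemma V_0: "V a 0 = {[]}"
  unfolding V_def by auto

lemma V_Suc: "V a (Suc s) = (\<Union>\<delta>\<in>V a s. (\<lambda>x. \<delta> @ [x]) ` {1..a (Suc s) - sum_list \<delta>})"
proof (rule Set.set_eqI, rule iffI)
  fix \<delta>' assume d: "\<delta>' \<in> V a (Suc s)"
  then have ne: "\<delta>' \<noteq> []" unfolding V_def by auto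
  define \<delta> where "\<delta> = butlast \<delta>'"
  define x where "x = last \<delta>'"
  have eq: "\<delta>' = \<delta> @ [x]" using ne unfolding \<delta>_def x_def by simp
  have len: "length \<delta> = s" using d unfolding V_def \<delta>_def by auto
  have pos: "\<forall>y\<in>set \<delta>'. 0 < y" using d unfolding V_def by auto
  have pre: "\<forall>i<Suc s. sum_list (take (Suc i) \<delta>') \<le> a (Suc i)" using d unfolding V_def by auto
  have "\<delta> \<in> V a s"
  proof -
    have "\<forall>i<s. sum_list (take (Suc i) \<delta>) \<le> a (Suc i)"
    proof (intro allI impI)
      fix i assume "i < s"
      then have "take (Suc i) \<delta>' = take (Suc i) \<delta>" using eq len by simp
      then show "sum_list (take (Suc i) \<delta>) \<le> a (Suc i)" using pre \<open>i < s\<close> by (metis less_SucI)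
    qed
    then show ?thesis unfolding V_def using len pos eq by auto
  qed
  moreover have "x \<in> {1..a (Suc s) - sum_list \<delta>}"
  proof -
    have "0 < x" using pos eq by auto
    moreover have "sum_list (take (Suc s) \<delta>') \<le> a (Suc s)" using pre by auto
    then have "sum_list \<delta> + x \<le> a (Suc s)" using eq len by simp
    ultimately show ?thesis by auto
  qed
  ultimately show "\<delta>' \<in> (\<Union>\<delta>\<in>V a s. (\<lambda>x. \<delta> @ [x]) ` {1..a (Suc s) - sum_list \<delta>})"
    using eq by blast
next
  fix \<delta>' assume "\<delta>' \<in> (\<Union>\<delta>\<in>V a s. (\<lambda>x. \<delta> @ [x]) ` {1..a (Suc s) - sum_list \<delta>})"
  then obtain \<delta> x where d: "\<delta> \<in> V a s" and x: "x \<in> {1..a (Suc s) - sum_list \<delta>}" and eq: "\<delta>' = \<delta> @ [x]"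
    by blast
  have len: "length \<delta> = s" using d unfolding V_def by auto
  have pre: "\<forall>i<s. sum_list (take (Suc i) \<delta>) \<le> a (Suc i)" and pos: "\<forall>y\<in>set \<delta>. 0 < y"
    using d unfolding V_def by auto
  have "\<forall>i<Suc s. sum_list (take (Suc i) (\<delta> @ [x])) \<le> a (Suc i)"
  proof (intro allI impI)
    fix i assume i: "i < Suc s"
    show "sum_list (take (Suc i) (\<delta> @ [x])) \<le> a (Suc i)"
    proof (cases "i < s")
      case True
      then have "take (Suc i) (\<delta> @ [x]) = take (Suc i) \<delta>" using len by simp
      then show ?thesis using pre True by simp
    next
      case False
      then have "i = s" using i by simp
      then show ?thesis using x len by simp arith
    qed
  qed
  then show "\<delta>' \<in> V a (Suc s)"
    unfolding V_def eq using pos x len by auto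
qed

lemma finite_V: "finite (V a r)"
  by (induction r) (auto simp: V_0 V_Suc)

lemma sum_V_Suc:
  "(\<Sum>\<delta>'\<in>V a (Suc s). f \<delta>') = (\<Sum>\<delta>\<in>V a s. \<Sum>x\<in>{1..a (Suc s) - sum_list \<delta>}. f (\<delta> @ [x]))"
proof -
  have "(\<Sum>\<delta>'\<in>V a (Suc s). f \<delta>') = (\<Sum>\<delta>\<in>V a s. \<Sum>\<delta>'\<in>(\<lambda>x. \<delta> @ [x]) ` {1..a (Suc s) - sum_list \<delta>}. f \<delta>')"
    unfolding V_Suc
    by (rule sum.UNION_disjoint) (auto simp: finite_V)
  also have "\<dots> = (\<Sum>\<delta>\<in>V a s. \<Sum>x\<in>{1..a (Suc s) - sum_list \<delta>}. f (\<delta> @ [x]))"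
    by (rule sum.cong[OF refl], subst sum.reindex) (auto simp: inj_on_def)
  finally show ?thesis .
qed

lemma hockey:
  "(D + l choose Suc l) + (\<Sum>x\<in>{1..m}. (D + l + (x - 1)) choose l) = (D + m + l choose Suc l)"
proof (induction m)
  case 0 then show ?case by simp
next
  case (Suc m)
  have "(\<Sum>x\<in>{1..Suc m}. (D + l + (x - 1)) choose l) = (\<Sum>x\<in>{1..m}. (D + l + (x - 1)) choose l) + (D + l + m choose l)"
    by simp
  then show ?case using Suc by (simp add: add_ac)
qed

lemma V_sum_le:
  assumes mono: "\<And>i. a i \<le> a (Suc i)" and d: "\<delta> \<in> V a s"
  shows "sum_list \<delta> \<le> a (Suc s)"
proof (cases s)
  case 0 then show ?thesis using d by (simp add: V_0)
next
  case (Suc t)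
  have "sum_list (take (Suc t) \<delta>) \<le> a (Suc t)" using d Suc unfolding V_def by auto
  moreover have "take (Suc t) \<delta> = \<delta>" using d Suc unfolding V_def by auto
  ultimately show ?thesis using mono[of s] Suc by simp
qed

lemma Psi_rec:
  assumes mono: "\<And>i. a i \<le> a (Suc i)" and sq: "s < q"
  shows "Psi a s q + Psi a (Suc s) q = card (V a s) * ((a (Suc s) + q - s - 1) choose (q - s))"
proof -
  define l where "l = q - s - 1"
  have l: "q = s + Suc l" using sq unfolding l_def by simp
  have t1: "sum_list (\<delta> @ [x]) + q - Suc s - 1 = sum_list \<delta> + l + (x - 1)" if "x \<in> {1..m}" for \<delta> x m
    using that unfolding l by simp
  have t2: "q - Suc s = l" unfolding l by simp
  have P1: "Psi a (Suc s) q = (\<Sum>\<delta>\<in>V a s. \<Sum>x\<in>{1..a (Suc s) - sum_list \<delta>}. (sum_list \<delta> + l + (x - 1)) choose l)"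
    unfolding Psi_def sum_V_Suc
    by (rule sum.cong[OF refl], rule sum.cong[OF refl]) (simp only: t1 t2)
  have P0: "Psi a s q = (\<Sum>\<delta>\<in>V a s. (sum_list \<delta> + l) choose Suc l)"
  proof -
    have "\<And>D. D + q - s - 1 = D + l" "q - s = Suc l" unfolding l by simp_all
    then show ?thesis unfolding Psi_def by simp
  qed
  have "Psi a s q + Psi a (Suc s) q = (\<Sum>\<delta>\<in>V a s. (sum_list \<delta> + l choose Suc l) + (\<Sum>x\<in>{1..a (Suc s) - sum_list \<delta>}. (sum_list \<delta> + l + (x - 1)) choose l))"
    unfolding P0 P1 sum.distrib ..
  also have "\<dots> = (\<Sum>\<delta>\<in>V a s. (a (Suc s) + l) choose Suc l)"
  proof (rule sum.cong[OF refl])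
    fix \<delta> assume d: "\<delta> \<in> V a s"
    have "sum_list \<delta> \<le> a (Suc s)" by (rule V_sum_le[of a, OF mono d])
    then have e: "sum_list \<delta> + (a (Suc s) - sum_list \<delta>) + l = a (Suc s) + l" by simp
    show "(sum_list \<delta> + l choose Suc l) + (\<Sum>x\<in>{1..a (Suc s) - sum_list \<delta>}. (sum_list \<delta> + l + (x - 1)) choose l) = (a (Suc s) + l) choose Suc l"
      by (simp only: hockey e)
  qed
  also have "\<dots> = card (V a s) * ((a (Suc s) + q - s - 1) choose (q - s))"
  proof -
    have "a (Suc s) + q - s - 1 = a (Suc s) + l" "q - s = Suc l" unfolding l by simp_all
    then show ?thesis by simp
  qed
  finally show ?thesis .
qed

lemma Psi_diag: "Psi a s s = card (V a s)"
  unfolding Psi_def by simp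

lemma Psi_0: "0 < q \<Longrightarrow> Psi a 0 q = 0"
  unfolding Psi_def by (simp add: V_0)



definition ent :: "nat list \<Rightarrow> nat \<Rightarrow> nat \<Rightarrow> int" where
  "ent \<alpha> i j = binom_neg0 (int j - int i + int (sum_list (take (Suc i) \<alpha>))) (int j - int i + 1)"

definition Mq :: "nat list \<Rightarrow> nat \<Rightarrow> nat \<Rightarrow> int mat" where
  "Mq \<alpha> r p = mat r r (\<lambda>(i,j). if j = r - 1 then ent \<alpha> i p else ent \<alpha> i j)"

lemma ascent_matrix_ent:
  "ascent_matrix \<alpha> = mat (length \<alpha> - 1) (length \<alpha> - 1) (\<lambda>(i,j). ent \<alpha> i j)"
  unfolding ascent_matrix_def ent_def Let_def
  by (rule eq_matI) (auto simp: algebra_simps)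

lemma ent_low: "j + 1 < i \<Longrightarrow> ent \<alpha> i j = 0"
  unfolding ent_def binom_neg0_def by auto

lemma ent_sub: "Suc j = i \<Longrightarrow> ent \<alpha> i j = 1"
  unfolding ent_def binom_neg0_def by auto

lemma ent_up: "i \<le> j \<Longrightarrow> ent \<alpha> i j = int ((j - i + sum_list (take (Suc i) \<alpha>)) choose (j - i + 1))"
proof -
  assume ij: "i \<le> j"
  have 1: "nat (int j - int i + int (sum_list (take (Suc i) \<alpha>))) = j - i + sum_list (take (Suc i) \<alpha>)"
    using ij by simp
  have 2: "nat (int j - int i + 1) = j - i + 1" using ij by simp
  show ?thesis unfolding ent_def binom_neg0_def using ij 1 2 by simp
qed

lemma take_mono_sum: "sum_list (take i (\<alpha>::nat list)) \<le> sum_list (take (Suc i) \<alpha>)"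
proof (cases "i < length \<alpha>")
  case True then show ?thesis by (simp add: take_Suc_conv_app_nth)
next
  case False then show ?thesis by simp
qed

lemma Mq_carrier: "Mq \<alpha> r p \<in> carrier_mat r r"
  unfolding Mq_def by simp

lemma det_Mq:
  "1 \<le> r \<Longrightarrow> r \<le> Suc p \<Longrightarrow> det (Mq \<alpha> r p) = int (Psi (\<lambda>i. sum_list (take i \<alpha>)) r (Suc p))"
proof (induction r arbitrary: p)
  case 0 then show ?case by simp
next
  case (Suc s)
  define a where "a = (\<lambda>i. sum_list (take i \<alpha>))"
  have mono: "\<And>i. a i \<le> a (Suc i)" unfolding a_def by (rule take_mono_sum)
  have sp: "s \<le> p" using Suc.prems by simp
  then have sp': "s < Suc p" by simp
  have rec: "Psi a s (Suc p) + Psi a (Suc s) (Suc p) = card (V a s) * ((a (Suc s) + Suc p - s - 1) choose (Suc p - s))"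
    by (rule Psi_rec[of a s "Suc p", OF mono sp'])
  have e1: "p - s + a (Suc s) = a (Suc s) + Suc p - s - 1" using sp by arith
  have e2: "p - s + 1 = Suc p - s" using sp by arith
  have Cent: "ent \<alpha> s p = int ((a (Suc s) + Suc p - s - 1) choose (Suc p - s))"
    using ent_up[of s p \<alpha>, OF sp] unfolding a_def e1[unfolded a_def] e2 .
  show ?case
  proof (cases s)
    case 0
    have "det (Mq \<alpha> (Suc s) p) = ent \<alpha> 0 p"
      using 0 by (subst det_single[of _]) (auto simp: Mq_def)
    moreover have "Psi a 0 (Suc p) = 0" by (rule Psi_0) simp
    moreover have "card (V a 0) = 1" by (simp add: V_0)
    ultimately show ?thesis using rec Cent 0 unfolding a_def by simp
  next
    case (Suc t)
    let ?M = "Mq \<alpha> (Suc s) p"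
    have M: "?M \<in> carrier_mat (Suc s) (Suc s)" by (rule Mq_carrier)
    have "det ?M = (\<Sum>j<Suc s. ?M $$ (s,j) * cofactor ?M s j)"
      by (rule laplace_expansion_row[OF M]) simp
    also have "\<dots> = (\<Sum>j<t. ?M $$ (s,j) * cofactor ?M s j) + ?M $$ (s,t) * cofactor ?M s t + ?M $$ (s,s) * cofactor ?M s s"
      using Suc by simp
    also have "(\<Sum>j<t. ?M $$ (s,j) * cofactor ?M s j) = 0"
      by (rule sum.neutral) (auto simp: Mq_def Suc ent_low)
    also have "?M $$ (s,t) = 1" using Suc by (simp add: Mq_def ent_sub)
    also have "?M $$ (s,s) = ent \<alpha> s p" by (simp add: Mq_def)
    also have "mat_delete ?M s t = Mq \<alpha> s p"
      by (rule eq_matI) (auto simp: mat_delete_def Mq_def Suc)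
    then have "cofactor ?M s t = - det (Mq \<alpha> s p)"
      unfolding cofactor_def using Suc by simp
    also have "mat_delete ?M s s = Mq \<alpha> s t"
      by (rule eq_matI) (auto simp: mat_delete_def Mq_def Suc)
    then have "cofactor ?M s s = det (Mq \<alpha> s t)"
      unfolding cofactor_def by simp
    finally have "det ?M = - det (Mq \<alpha> s p) + ent \<alpha> s p * det (Mq \<alpha> s t)" by simp
    moreover have "det (Mq \<alpha> s p) = int (Psi a s (Suc p))"
      using Suc.IH[of p] Suc.prems Suc unfolding a_def by simp
    moreover have "det (Mq \<alpha> s t) = int (card (V a s))"
      using Suc.IH[of t] Suc Psi_diag[of a s] unfolding a_def by simp
    ultimately have "det ?M = int (card (V a s) * ((a (Suc s) + Suc p - s - 1) choose (Suc p - s))) - int (Psi a s (Suc p))"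
      using Cent by simp
    also have "\<dots> = int (Psi a (Suc s) (Suc p))"
      using rec by (metis add_diff_cancel_left' of_nat_add)
    finally show ?thesis unfolding a_def .
  qed
qed



definition blocks :: "nat list \<Rightarrow> nat list \<Rightarrow> bool list" where
  "blocks \<alpha> \<delta> = concat (map (\<lambda>(a, d). replicate a True @ replicate d False) (zip \<alpha> \<delta>))"

lemma blocks_Nil[simp]: "blocks [] \<delta> = []"
  unfolding blocks_def by simp

lemma blocks_Cons[simp]: "blocks (a # \<alpha>) (d # \<delta>) = replicate a True @ replicate d False @ blocks \<alpha> \<delta>"
  unfolding blocks_def by simp

lemma blocks_counts:
  "length \<delta> = length \<alpha> \<Longrightarrow> length (filter id (blocks \<alpha> \<delta>)) = sum_list \<alpha> \<and> length (filter Not (blocks \<alpha> \<delta>)) = sum_list \<delta>"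
proof (induction \<alpha> arbitrary: \<delta>)
  case Nil then show ?case by simp
next
  case (Cons a \<alpha>)
  then obtain d \<delta>' where "\<delta> = d # \<delta>'" by (cases \<delta>) auto
  with Cons show ?case by simp
qed

definition pref_ok :: "int \<Rightarrow> bool list \<Rightarrow> bool" where
  "pref_ok c w \<longleftrightarrow> (\<forall>m \<le> length w. int (length (filter Not (take m w))) \<le> c + int (length (filter id (take m w))))"

lemma pref_ok_append:
  "pref_ok c (u @ v) \<longleftrightarrow> pref_ok c u \<and> pref_ok (c + int (length (filter id u)) - int (length (filter Not u))) v"
proof
  assume H: "pref_ok c (u @ v)"
  have H': "\<And>m. m \<le> length (u @ v) \<Longrightarrow> int (length (filter Not (take m (u @ v)))) \<le> c + int (length (filter id (take m (u @ v))))"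
    using H unfolding pref_ok_def by blast
  have "pref_ok c u" unfolding pref_ok_def
  proof (intro allI impI)
    fix m assume m: "m \<le> length u"
    have "m \<le> length (u @ v)" using m by simp
    from H'[OF this] m
    show "int (length (filter Not (take m u))) \<le> c + int (length (filter id (take m u)))"
      by simp
  qed
  moreover have "pref_ok (c + int (length (filter id u)) - int (length (filter Not u))) v" unfolding pref_ok_def
  proof (intro allI impI)
    fix m assume m: "m \<le> length v"
    have "length u + m \<le> length (u @ v)" using m by simp
    from H'[OF this]
    have "int (length (filter Not (u @ take m v))) \<le> c + int (length (filter id (u @ take m v)))"
      by simp
    then show "int (length (filter Not (take m v))) \<le> c + int (length (filter id u)) - int (length (filter Not u)) + int (length (filter id (take m v)))"
      by simp
  qed
  ultimately show "pref_ok c u \<and> pref_ok (c + int (length (filter id u)) - int (length (filter Not u))) v" ..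
next
  assume H: "pref_ok c u \<and> pref_ok (c + int (length (filter id u)) - int (length (filter Not u))) v"
  have H1: "\<And>m. m \<le> length u \<Longrightarrow> int (length (filter Not (take m u))) \<le> c + int (length (filter id (take m u)))"
    using H unfolding pref_ok_def by blast
  have H2: "\<And>m. m \<le> length v \<Longrightarrow> int (length (filter Not (take m v))) \<le> (c + int (length (filter id u)) - int (length (filter Not u))) + int (length (filter id (take m v)))"
    using H unfolding pref_ok_def by blast
  show "pref_ok c (u @ v)" unfolding pref_ok_def
  proof (intro allI impI)
    fix m assume m: "m \<le> length (u @ v)"
    show "int (length (filter Not (take m (u @ v)))) \<le> c + int (length (filter id (take m (u @ v))))"
    proof (cases "m \<le> length u")
      case True
      then show ?thesis using H1[OF True] by simp
    next
      case False
      define m' where "m' = m - length u"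
      have m': "m = length u + m'" using False unfolding m'_def by simp
      have "m' \<le> length v" using m m' by simp
      from H2[OF this] show ?thesis using m' by simp
    qed
  qed
qed

lemma pref_ok_True: "pref_ok c (replicate a True) \<longleftrightarrow> 0 \<le> c"
proof
  assume "pref_ok c (replicate a True)"
  then show "0 \<le> c" unfolding pref_ok_def by (metis le0 of_nat_0 take_0 add_0_right filter.simps(1) list.size(3))
next
  assume "0 \<le> c"
  then show "pref_ok c (replicate a True)" unfolding pref_ok_def by (simp add: take_replicate)
qed

lemma pref_ok_False: "pref_ok c (replicate d False) \<longleftrightarrow> 0 \<le> c \<and> int d \<le> c"
proof
  assume H: "pref_ok c (replicate d False)"
  have "0 \<le> c" using H[unfolded pref_ok_def, rule_format, of 0] by simp
  moreover have "int d \<le> c" using H[unfolded pref_ok_def, rule_format, of d] by simp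
  ultimately show "0 \<le> c \<and> int d \<le> c" ..
next
  assume "0 \<le> c \<and> int d \<le> c"
  then show "pref_ok c (replicate d False)" unfolding pref_ok_def by (auto simp: take_replicate)
qed

lemma pref_ok_Nil: "pref_ok c [] \<longleftrightarrow> 0 \<le> c"
  unfolding pref_ok_def by simp

lemma all_less_Suc_split: "(\<forall>i<Suc n. P i) \<longleftrightarrow> P 0 \<and> (\<forall>j<n. P (Suc j))"
  by (auto simp: less_Suc_eq_0_disj)

lemma pref_ok_blocks:
  "length \<delta> = length \<alpha> \<Longrightarrow> pref_ok c (blocks \<alpha> \<delta>) \<longleftrightarrow>
     0 \<le> c \<and> (\<forall>i<length \<alpha>. int (sum_list (take (Suc i) \<delta>)) \<le> c + int (sum_list (take (Suc i) \<alpha>)))"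
proof (induction \<alpha> arbitrary: \<delta> c)
  case Nil then show ?case by (simp add: pref_ok_Nil)
next
  case (Cons a \<alpha>)
  then obtain d \<delta>' where d: "\<delta> = d # \<delta>'" and len: "length \<delta>' = length \<alpha>" by (cases \<delta>) auto
  have "pref_ok c (blocks (a # \<alpha>) \<delta>) \<longleftrightarrow>
    0 \<le> c \<and> (0 \<le> c + int a \<and> int d \<le> c + int a) \<and> pref_ok (c + int a - int d) (blocks \<alpha> \<delta>')"
    unfolding d blocks_Cons pref_ok_append pref_ok_True pref_ok_False by simp
  also have "\<dots> \<longleftrightarrow> 0 \<le> c \<and> int d \<le> c + int a \<and> (0 \<le> c + int a - int d \<and>
      (\<forall>i<length \<alpha>. int (sum_list (take (Suc i) \<delta>')) \<le> c + int a - int d + int (sum_list (take (Suc i) \<alpha>))))"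
    using Cons.IH[OF len] by auto
  also have "\<dots> \<longleftrightarrow> 0 \<le> c \<and> (\<forall>i<length (a # \<alpha>). int (sum_list (take (Suc i) \<delta>)) \<le> c + int (sum_list (take (Suc i) (a # \<alpha>))))"
    unfolding d length_Cons all_less_Suc_split by (auto simp: algebra_simps)
  finally show ?case .
qed

lemma blocks_hd:
  assumes "\<forall>x\<in>set \<alpha>. 0 < x" "length \<delta> = length \<alpha>"
  shows "blocks \<alpha> \<delta> = [] \<or> hd (blocks \<alpha> \<delta>)"
proof (cases \<alpha>)
  case Nil then show ?thesis by simp
next
  case (Cons a \<alpha>')
  then obtain d \<delta>' where "\<delta> = d # \<delta>'" using assms by (cases \<delta>) auto
  moreover have "0 < a" using assms Cons by auto
  ultimately show ?thesis using Cons by (cases a) auto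
qed

lemma rep_False_cancel:
  "replicate d1 False @ B1 = replicate d2 False @ B2 \<Longrightarrow> (B1 = [] \<or> hd B1) \<Longrightarrow> (B2 = [] \<or> hd B2) \<Longrightarrow> d1 = d2 \<and> B1 = B2"
proof (induction d1 arbitrary: d2)
  case 0 then show ?case by (cases d2) auto
next
  case (Suc d1) then show ?case by (cases d2) auto
qed

lemma blocks_inj:
  "\<forall>x\<in>set \<alpha>. 0 < x \<Longrightarrow> length \<delta>1 = length \<alpha> \<Longrightarrow> length \<delta>2 = length \<alpha> \<Longrightarrow> blocks \<alpha> \<delta>1 = blocks \<alpha> \<delta>2 \<Longrightarrow> \<delta>1 = \<delta>2"
proof (induction \<alpha> arbitrary: \<delta>1 \<delta>2)
  case Nil then show ?case by simp
next
  case (Cons a \<alpha>)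
  obtain d1 e1 where 1: "\<delta>1 = d1 # e1" "length e1 = length \<alpha>" using Cons.prems by (cases \<delta>1) auto
  obtain d2 e2 where 2: "\<delta>2 = d2 # e2" "length e2 = length \<alpha>" using Cons.prems by (cases \<delta>2) auto
  have pos: "\<forall>x\<in>set \<alpha>. 0 < x" using Cons.prems by auto
  have "replicate d1 False @ blocks \<alpha> e1 = replicate d2 False @ blocks \<alpha> e2"
    using Cons.prems(4) 1 2 by simp
  then have "d1 = d2 \<and> blocks \<alpha> e1 = blocks \<alpha> e2"
    using rep_False_cancel blocks_hd[OF pos 1(2)] blocks_hd[OF pos 2(2)] by blast
  then show ?case using Cons.IH[OF pos 1(2) 2(2)] 1 2 by simp
qed

lemma dyck_blocks:
  assumes "length \<delta> = length \<alpha>" "sum_list \<alpha> = n"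
  shows "dyck_path n (blocks \<alpha> \<delta>) \<longleftrightarrow> sum_list \<delta> = n \<and>
     (\<forall>i<length \<alpha>. sum_list (take (Suc i) \<delta>) \<le> sum_list (take (Suc i) \<alpha>))"
proof -
  have "dyck_path n (blocks \<alpha> \<delta>) \<longleftrightarrow> sum_list \<delta> = n \<and> pref_ok 0 (blocks \<alpha> \<delta>)"
    unfolding dyck_path_def pref_ok_def using blocks_counts[OF assms(1)] assms(2) by auto
  also have "\<dots> \<longleftrightarrow> sum_list \<delta> = n \<and> (\<forall>i<length \<alpha>. sum_list (take (Suc i) \<delta>) \<le> sum_list (take (Suc i) \<alpha>))"
    using pref_ok_blocks[OF assms(1), of 0] by simp
  finally show ?thesis .
qed



lemma sum_take_last_less:
  assumes pos: "\<forall>x\<in>set \<alpha>. 0 < x" and len: "length \<alpha> = k" and k: "1 \<le> k"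
  shows "sum_list (take (k - 1) \<alpha>) < sum_list (\<alpha>::nat list)"
proof -
  have ne: "\<alpha> \<noteq> []" using len k by auto
  have "\<alpha> = butlast \<alpha> @ [last \<alpha>]" using ne by simp
  then have "sum_list \<alpha> = sum_list (butlast \<alpha>) + last \<alpha>" by (metis sum_list_append sum_list_simps(1) sum_list_simps(2) add_0_right)
  moreover have "0 < last \<alpha>" using pos ne by simp
  moreover have "take (k - 1) \<alpha> = butlast \<alpha>" using len by (simp add: butlast_conv_take)
  ultimately show ?thesis by simp
qed

theorem lemma4p8:
  fixes \<alpha> :: "nat list" and n k :: nat
  assumes "length \<alpha> = k" and "1 \<le> k"
    and "\<forall>a \<in> set \<alpha>. 0 < a" and "sum_list \<alpha> = n"
  shows "int (card {w. dyck_path n w \<and> has_ascent_composition w \<alpha>}) = det (ascent_matrix \<alpha>)"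
proof -
  note len = assms(1) and k1 = assms(2) and pos = assms(3) and sn = assms(4)
  define a where "a = (\<lambda>i. sum_list (take i \<alpha>))"
  define \<Delta> where "\<Delta> = {\<delta>. length \<delta> = k \<and> (\<forall>x\<in>set \<delta>. 0 < x) \<and> sum_list \<delta> = n \<and>
      (\<forall>i<k. sum_list (take (Suc i) \<delta>) \<le> a (Suc i))}"
  have W_eq: "{w. dyck_path n w \<and> has_ascent_composition w \<alpha>} = blocks \<alpha> ` \<Delta>"
  proof (rule Set.set_eqI, rule iffI)
    fix w assume "w \<in> {w. dyck_path n w \<and> has_ascent_composition w \<alpha>}"
    then have dp: "dyck_path n w" and hc: "has_ascent_composition w \<alpha>" by auto
    from hc obtain \<delta> where d1: "length \<delta> = length \<alpha>" and d2: "\<forall>d\<in>set \<delta>. 0 < d" and w: "w = blocks \<alpha> \<delta>"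
      unfolding has_ascent_composition_def blocks_def by blast
    have "sum_list \<delta> = n \<and> (\<forall>i<length \<alpha>. sum_list (take (Suc i) \<delta>) \<le> sum_list (take (Suc i) \<alpha>))"
      using dp dyck_blocks[OF d1 sn] w by simp
    then have "\<delta> \<in> \<Delta>" unfolding \<Delta>_def a_def using d1 d2 len by simp
    then show "w \<in> blocks \<alpha> ` \<Delta>" using w by blast
  next
    fix w assume "w \<in> blocks \<alpha> ` \<Delta>"
    then obtain \<delta> where d: "\<delta> \<in> \<Delta>" and w: "w = blocks \<alpha> \<delta>" by blast
    have d1: "length \<delta> = length \<alpha>" using d len unfolding \<Delta>_def by simp
    have "dyck_path n w"
      using dyck_blocks[OF d1 sn] d len unfolding w \<Delta>_def a_def by simp
    moreover have "has_ascent_composition w \<alpha>"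
      unfolding has_ascent_composition_def
      using d d1 pos unfolding w blocks_def \<Delta>_def by blast
    ultimately show "w \<in> {w. dyck_path n w \<and> has_ascent_composition w \<alpha>}" by simp
  qed
  have inj: "inj_on (blocks \<alpha>) \<Delta>"
  proof (rule inj_onI)
    fix x y assume "x \<in> \<Delta>" "y \<in> \<Delta>" "blocks \<alpha> x = blocks \<alpha> y"
    then show "x = y" using blocks_inj[OF pos] len unfolding \<Delta>_def by auto
  qed
  have lt: "a (k - 1) < n" using sum_take_last_less[OF pos len k1] sn unfolding a_def by simp
  have ak: "a k = n" using len sn unfolding a_def by simp
  have bij: "bij_betw butlast \<Delta> (V a (k - 1))"
  proof (rule bij_betw_byWitness[where f' = "\<lambda>\<delta>. \<delta> @ [n - sum_list \<delta>]"])
    show "\<forall>\<delta>\<in>\<Delta>. butlast \<delta> @ [n - sum_list (butlast \<delta>)] = \<delta>"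
    proof
      fix \<delta> assume d: "\<delta> \<in> \<Delta>"
      then have ne: "\<delta> \<noteq> []" using k1 unfolding \<Delta>_def by auto
      then have e: "\<delta> = butlast \<delta> @ [last \<delta>]" by simp
      then have "sum_list \<delta> = sum_list (butlast \<delta>) + last \<delta>"
        by (metis sum_list_append sum_list_simps(1) sum_list_simps(2) add_0_right)
      moreover have "sum_list \<delta> = n" using d unfolding \<Delta>_def by simp
      ultimately have "last \<delta> = n - sum_list (butlast \<delta>)" by arith
      then show "butlast \<delta> @ [n - sum_list (butlast \<delta>)] = \<delta>" using e by simp
    qed
    show "\<forall>\<delta>\<in>V a (k - 1). butlast (\<delta> @ [n - sum_list \<delta>]) = \<delta>" by simp
    show "butlast ` \<Delta> \<subseteq> V a (k - 1)"
    proof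
      fix \<delta>' assume "\<delta>' \<in> butlast ` \<Delta>"
      then obtain \<delta> where d: "\<delta> \<in> \<Delta>" and e: "\<delta>' = butlast \<delta>" by blast
      have l: "length \<delta> = k" and p: "\<forall>x\<in>set \<delta>. 0 < x" and c: "\<forall>i<k. sum_list (take (Suc i) \<delta>) \<le> a (Suc i)"
        using d unfolding \<Delta>_def by auto
      have "\<forall>i<k - 1. sum_list (take (Suc i) \<delta>') \<le> a (Suc i)"
      proof (intro allI impI)
        fix i assume i: "i < k - 1"
        then have "take (Suc i) \<delta>' = take (Suc i) \<delta>" unfolding e using l by (simp add: take_butlast)
        then show "sum_list (take (Suc i) \<delta>') \<le> a (Suc i)" using c i by simp
      qed
      moreover have "\<forall>x\<in>set \<delta>'. 0 < x" using p unfolding e by (auto dest: in_set_butlastD)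
      moreover have "length \<delta>' = k - 1" using l e by simp
      ultimately show "\<delta>' \<in> V a (k - 1)" unfolding V_def by simp
    qed
    show "(\<lambda>\<delta>. \<delta> @ [n - sum_list \<delta>]) ` V a (k - 1) \<subseteq> \<Delta>"
    proof
      fix \<delta>' assume "\<delta>' \<in> (\<lambda>\<delta>. \<delta> @ [n - sum_list \<delta>]) ` V a (k - 1)"
      then obtain \<delta> where d: "\<delta> \<in> V a (k - 1)" and e: "\<delta>' = \<delta> @ [n - sum_list \<delta>]" by blast
      have l: "length \<delta> = k - 1" and p: "\<forall>x\<in>set \<delta>. 0 < x" and c: "\<forall>i<k - 1. sum_list (take (Suc i) \<delta>) \<le> a (Suc i)"
        using d unfolding V_def by auto
      have sle: "sum_list \<delta> \<le> a (k - 1)"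
      proof (cases "k - 1")
        case 0 then show ?thesis using l by simp
      next
        case (Suc t)
        then have "sum_list (take (Suc t) \<delta>) \<le> a (Suc t)" using c by simp
        then show ?thesis using l Suc by simp
      qed
      then have slt: "sum_list \<delta> < n" using lt by simp
      have "\<forall>i<k. sum_list (take (Suc i) \<delta>') \<le> a (Suc i)"
      proof (intro allI impI)
        fix i assume i: "i < k"
        show "sum_list (take (Suc i) \<delta>') \<le> a (Suc i)"
        proof (cases "i < k - 1")
          case True
          then have "take (Suc i) \<delta>' = take (Suc i) \<delta>" unfolding e using l by simp
          then show ?thesis using c True by simp
        next
          case False
          then have ik: "Suc i = k" using i by simp
          have "take (Suc i) \<delta>' = \<delta>'" using ik l k1 unfolding e by simp
          then show ?thesis using ik ak slt unfolding e by simp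
        qed
      qed
      moreover have "\<forall>x\<in>set \<delta>'. 0 < x" using p slt unfolding e by auto
      moreover have "length \<delta>' = k" using l k1 unfolding e by simp
      moreover have "sum_list \<delta>' = n" using slt unfolding e by simp
      ultimately show "\<delta>' \<in> \<Delta>" unfolding \<Delta>_def by simp
    qed
  qed
  have card_eq: "card {w. dyck_path n w \<and> has_ascent_composition w \<alpha>} = card (V a (k - 1))"
    unfolding W_eq using card_image[OF inj] bij_betw_same_card[OF bij] by simp
  have det_eq: "det (ascent_matrix \<alpha>) = int (card (V a (k - 1)))"
  proof (cases "k = 1")
    case True
    then have "ascent_matrix \<alpha> \<in> carrier_mat 0 0" unfolding ascent_matrix_ent using len by simp
    then have "det (ascent_matrix \<alpha>) = 1" by simp
    moreover have "card (V a (k - 1)) = 1" using True by (simp add: V_0)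
    ultimately show ?thesis by simp
  next
    case False
    then have k2: "2 \<le> k" using k1 by simp
    have "ascent_matrix \<alpha> = Mq \<alpha> (k - 1) (k - 2)"
      unfolding ascent_matrix_ent Mq_def using len k2
      by (intro eq_matI) (auto simp: numeral_2_eq_2)
    moreover have "det (Mq \<alpha> (k - 1) (k - 2)) = int (Psi a (k - 1) (Suc (k - 2)))"
      using det_Mq[of "k - 1" "k - 2" \<alpha>] k2 unfolding a_def by simp
    moreover have "Suc (k - 2) = k - 1" using k2 by simp
    ultimately show ?thesis using Psi_diag by simp
  qed
  show ?thesis using card_eq det_eq by simp
qed

end
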